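(* Let $\alpha>0$. Let $R_1$ be the Reeb graph consisting of a single edge with $f_1$ ranging over $[0,\alpha]$, and let $R_2$ be the Reeb graph with two nodes of values $0$ and $\alpha$ joined by two edges (a loop of height $\alpha$). Then $d_I(R_1,R_2)=\alpha/4$, and there is no Reeb graph $M$ with $d_I(M,R_1)=d_I(M,R_2)=\alpha/8$.
   Context: A Reeb graph $R=(G,f)$ is a finite multigraph $G$ (identified with its geometric realization) with continuous $f$ strictly monotone on each edge and injective on nodes. A morphism is a continuous map $h$ with $f_2\circ h=f_1$. For $\varepsilon\ge0$, $R^\varepsilon$ is the Reeb graph (quotient by connected components of level sets) of $G\times[-\varepsilon,\varepsilon]$ with function $(x,t)\mapsto f(x)+t$, with quotient map $\pi$; $(R^\varepsilon)^\delta$ is identified with $R^{\varepsilon+\delta}$; $\eta(x)=\pi(x,0)$ is the shift $R\to R^\varepsilon$ and $\eta^{2\varepsilon}:R\to R^{2\varepsilon}$ the $2\varepsilon$-shift. For a morphism $\phi:R_1\to R_2^\varepsilon$, $\phi^\varepsilon:R_1^\varepsilon\to R_2^{2\varepsilon}$ is induced by $(x,t)\mapsto(\phi(x),t)$ on thickenings. An $\varepsilon$-interleaving is a pair $\phi:R_1\to R_2^\varepsilon$, $\psi:R_2\to R_1^\varepsilon$ with $\phi^\varepsilon\circ\psi=\eta_2^{2\varepsilon}$ and $\psi^\varepsilon\circ\phi=\eta_1^{2\varepsilon}$; $d_I$ is the infimum of $\varepsilon\ge0$ admitting an $\varepsilon$-interleaving. *)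

theory Defs
  imports "HOL-Analysis.Analysis"
begin

text \<open>A Reeb graph is a topological space X (the geometric realization of a finite
multigraph) together with a continuous f, strictly monotone on each edge and
injective on the nodes.  The realization is described intrinsically: X is compact
Hausdorff and is the union of a finite node set V and finitely many edges, each edge
being an arc (injective continuous path on [0,1]) between two nodes, along which f is
strictly monotone, whose interior avoids V and the interiors of the other edges.
(Compact Hausdorff makes the topology that of the geometric realization.)\<close>

definition reeb_graph :: "'a topology \<Rightarrow> ('a \<Rightarrow> real) \<Rightarrow> bool" where
  "reeb_graph X f \<longleftrightarrow>
     compact_space X \<and> Hausdorff_space X \<and> continuous_map X euclideanreal f \<and>
     (\<exists>V E. finite V \<and> finite E \<and> V \<subseteq> topspace X \<and> inj_on f V \<and>
        (\<forall>\<gamma>\<in>(E :: (real \<Rightarrow> 'a) set). continuous_map (top_of_set {0..1}) X \<gamma> \<and> inj_on \<gamma> {0..1} \<and>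
               \<gamma> 0 \<in> V \<and> \<gamma> 1 \<in> V \<and> \<gamma> ` {0<..<1} \<inter> V = {} \<and>
               strict_mono_on {0..1} (f \<circ> \<gamma>)) \<and>
        (\<forall>\<gamma>\<in>E. \<forall>\<delta>\<in>E. \<gamma> \<noteq> \<delta> \<longrightarrow> \<gamma> ` {0<..<1} \<inter> \<delta> ` {0<..<1} = {}) \<and>
        topspace X = V \<union> (\<Union>\<gamma>\<in>E. \<gamma> ` {0..1}))"

definition reeb_morphism ::
  "'a topology \<Rightarrow> ('a \<Rightarrow> real) \<Rightarrow> 'b topology \<Rightarrow> ('b \<Rightarrow> real) \<Rightarrow> ('a \<Rightarrow> 'b) \<Rightarrow> bool" where
  "reeb_morphism X f Y g h \<longleftrightarrow> continuous_map X Y h \<and> (\<forall>x\<in>topspace X. g (h x) = f x)"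

definition quotient_top :: "'a topology \<Rightarrow> ('a \<Rightarrow> 'b) \<Rightarrow> 'b topology" where
  "quotient_top X q = topology (\<lambda>U. U \<subseteq> q ` topspace X \<and> openin X {x \<in> topspace X. q x \<in> U})"

definition thick_space :: "'a topology \<Rightarrow> real \<Rightarrow> ('a \<times> real) topology" where
  "thick_space X \<epsilon> = prod_topology X (top_of_set {-\<epsilon>..\<epsilon>})"

definition thick_F :: "('a \<Rightarrow> real) \<Rightarrow> 'a \<times> real \<Rightarrow> real" where
  "thick_F f p = f (fst p) + snd p"

definition thick_cls :: "'a topology \<Rightarrow> ('a \<Rightarrow> real) \<Rightarrow> real \<Rightarrow> 'a \<times> real \<Rightarrow> ('a \<times> real) set" where
  "thick_cls X f \<epsilon> p = connected_component_of_set
      (subtopology (thick_space X \<epsilon>) {q \<in> topspace (thick_space X \<epsilon>). thick_F f q = thick_F f p}) p"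

definition thick :: "'a topology \<Rightarrow> ('a \<Rightarrow> real) \<Rightarrow> real \<Rightarrow> ('a \<times> real) set topology" where
  "thick X f \<epsilon> = quotient_top (thick_space X \<epsilon>) (thick_cls X f \<epsilon>)"

definition thick_fun :: "('a \<Rightarrow> real) \<Rightarrow> ('a \<times> real) set \<Rightarrow> real" where
  "thick_fun f C = thick_F f (SOME p. p \<in> C)"

definition reeb_shift :: "'a topology \<Rightarrow> ('a \<Rightarrow> real) \<Rightarrow> real \<Rightarrow> 'a \<Rightarrow> ('a \<times> real) set" where
  "reeb_shift X f \<delta> x = thick_cls X f \<delta> (x, 0)"

(* For phi : R1 -> R2^eps, the map phi^eps : R1^eps -> R2^(2 eps) induced by
   (x,t) |-> (phi(x),t), composed with the identification (R2^eps)^eps = R2^(2 eps),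
   which sends the class of (pi(y,s),t) to the class of (y,s+t). *)
definition reeb_ext ::
  "'b topology \<Rightarrow> ('b \<Rightarrow> real) \<Rightarrow> real \<Rightarrow> ('a \<Rightarrow> ('b \<times> real) set) \<Rightarrow> ('a \<times> real) set \<Rightarrow> ('b \<times> real) set" where
  "reeb_ext Y g \<epsilon> \<phi> C =
     (let p = (SOME p. p \<in> C); q = (SOME q. q \<in> \<phi> (fst p))
      in thick_cls Y g (2 * \<epsilon>) (fst q, snd q + snd p))"

definition interleaved ::
  "'a topology \<Rightarrow> ('a \<Rightarrow> real) \<Rightarrow> 'b topology \<Rightarrow> ('b \<Rightarrow> real) \<Rightarrow> real \<Rightarrow> bool" where
  "interleaved X1 f1 X2 f2 \<epsilon> \<longleftrightarrow>
     (\<exists>\<phi> \<psi>. reeb_morphism X1 f1 (thick X2 f2 \<epsilon>) (thick_fun f2) \<phi> \<and>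
            reeb_morphism X2 f2 (thick X1 f1 \<epsilon>) (thick_fun f1) \<psi> \<and>
            (\<forall>y\<in>topspace X2. reeb_ext X2 f2 \<epsilon> \<phi> (\<psi> y) = reeb_shift X2 f2 (2 * \<epsilon>) y) \<and>
            (\<forall>x\<in>topspace X1. reeb_ext X1 f1 \<epsilon> \<psi> (\<phi> x) = reeb_shift X1 f1 (2 * \<epsilon>) x))"

text \<open>Infimum in the extended reals (\<open>\<infinity>\<close> if no interleaving exists).\<close>
definition interleaving_distance ::
  "'a topology \<Rightarrow> ('a \<Rightarrow> real) \<Rightarrow> 'b topology \<Rightarrow> ('b \<Rightarrow> real) \<Rightarrow> ereal" where
  "interleaving_distance X1 f1 X2 f2 =
     Inf {ereal \<epsilon> | \<epsilon>. \<epsilon> \<ge> 0 \<and> interleaved X1 f1 X2 f2 \<epsilon>}"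

text \<open>\<open>R_1\<close>: a single edge, the interval [0,\<alpha>] with f = identity.\<close>
definition edge_space :: "real \<Rightarrow> real topology" where
  "edge_space \<alpha> = top_of_set {0..\<alpha>}"

text \<open>\<open>R_2\<close>: two nodes (0,0) and (\<alpha>,0) joined by two arcs (upper and lower parabola),
f = first coordinate.\<close>
definition loop_space :: "real \<Rightarrow> (real \<times> real) topology" where
  "loop_space \<alpha> = top_of_set {(t, y). 0 \<le> t \<and> t \<le> \<alpha> \<and> (y = t * (\<alpha> - t) \<or> y = - (t * (\<alpha> - t)))}"

end

theory Submission
  imports Defs
begin


lemma istop_quot: "istopology (\<lambda>U. U \<subseteq> q ` topspace X \<and> openin X {x \<in> topspace X. q x \<in> U})"
  unfolding istopology_def
proof (rule conjI; intro allI impI)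
  fix S T assume S: "S \<subseteq> q ` topspace X \<and> openin X {x \<in> topspace X. q x \<in> S}"
    and T: "T \<subseteq> q ` topspace X \<and> openin X {x \<in> topspace X. q x \<in> T}"
  have "{x \<in> topspace X. q x \<in> S \<inter> T} = {x \<in> topspace X. q x \<in> S} \<inter> {x \<in> topspace X. q x \<in> T}" by auto
  then show "S \<inter> T \<subseteq> q ` topspace X \<and> openin X {x \<in> topspace X. q x \<in> S \<inter> T}"
    using S T openin_Int[of X "{x \<in> topspace X. q x \<in> S}" "{x \<in> topspace X. q x \<in> T}"] by auto
next
  fix K assume K: "\<forall>U\<in>K. U \<subseteq> q ` topspace X \<and> openin X {x \<in> topspace X. q x \<in> U}"
  have "{x \<in> topspace X. q x \<in> \<Union>K} = (\<Union>U\<in>K. {x \<in> topspace X. q x \<in> U})" by auto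
  then show "\<Union>K \<subseteq> q ` topspace X \<and> openin X {x \<in> topspace X. q x \<in> \<Union>K}"
    using K by (auto intro!: openin_Union)
qed

lemma openin_quot: "openin (quotient_top X q) U \<longleftrightarrow> U \<subseteq> q ` topspace X \<and> openin X {x \<in> topspace X. q x \<in> U}"
  unfolding quotient_top_def by (simp add: topology_inverse'[OF istop_quot])

lemma topspace_quot: "topspace (quotient_top X q) = q ` topspace X"
proof -
  have e: "{x \<in> topspace X. q x \<in> q ` topspace X} = topspace X" by blast
  have 1: "openin (quotient_top X q) (q ` topspace X)"
    unfolding openin_quot e by simp
  have 2: "topspace (quotient_top X q) \<subseteq> q ` topspace X"
    using openin_topspace[of "quotient_top X q"] unfolding openin_quot by blast
  show ?thesis using 1 2 openin_subset by blast
qed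

lemma cont_quot: "continuous_map X (quotient_top X q) q"
  unfolding continuous_map_def topspace_quot openin_quot by auto

lemma topspace_TS: "topspace (thick_space X r) = topspace X \<times> {-r..r}"
  by (simp add: thick_space_def)

lemma cls_mem: "z \<in> topspace (thick_space X r) \<Longrightarrow> z \<in> thick_cls X f r z"
  unfolding thick_cls_def by (simp add: connected_component_of_refl)

lemma cls_sub: "w \<in> thick_cls X f r z \<Longrightarrow> w \<in> topspace (thick_space X r) \<and> thick_F f w = thick_F f z"
proof -
  assume "w \<in> thick_cls X f r z"
  then have "connected_component_of (subtopology (thick_space X r) {q \<in> topspace (thick_space X r). thick_F f q = thick_F f z}) z w"
    unfolding thick_cls_def by simp
  then have "w \<in> topspace (subtopology (thick_space X r) {q \<in> topspace (thick_space X r). thick_F f q = thick_F f z})"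
    by (rule connected_component_in_topspace[THEN conjunct2])
  then show ?thesis by (simp add: topspace_subtopology)
qed

lemma cls_conn: "connectedin (thick_space X r) (thick_cls X f r z)"
proof -
  have "connectedin (subtopology (thick_space X r) {q \<in> topspace (thick_space X r). thick_F f q = thick_F f z}) (thick_cls X f r z)"
    unfolding thick_cls_def by (rule connectedin_connected_component_of)
  then show ?thesis by (simp add: connectedin_subtopology)
qed

lemma cls_eq: assumes "w \<in> thick_cls X f r z" shows "thick_cls X f r w = thick_cls X f r z"
proof -
  have "thick_F f w = thick_F f z" using cls_sub[OF assms] by simp
  then have e: "{q \<in> topspace (thick_space X r). thick_F f q = thick_F f w} = {q \<in> topspace (thick_space X r). thick_F f q = thick_F f z}"
    by simp
  have "connected_component_of (subtopology (thick_space X r) {q \<in> topspace (thick_space X r). thick_F f q = thick_F f z}) z w"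
    using assms unfolding thick_cls_def by simp
  then have "connected_component_of (subtopology (thick_space X r) {q \<in> topspace (thick_space X r). thick_F f q = thick_F f z}) z =
     connected_component_of (subtopology (thick_space X r) {q \<in> topspace (thick_space X r). thick_F f q = thick_F f z}) w"
    by (simp only: connected_component_of_equiv)
  then show ?thesis unfolding thick_cls_def e by simp
qed

lemma cls_max: assumes "connectedin (thick_space X r) S" "z \<in> S" "\<forall>w\<in>S. thick_F f w = thick_F f z"
  shows "S \<subseteq> thick_cls X f r z"
proof -
  have "S \<subseteq> topspace (thick_space X r)" using assms(1) by (rule connectedin_subset_topspace)
  then have "S \<subseteq> {q \<in> topspace (thick_space X r). thick_F f q = thick_F f z}" using assms(3) by auto
  then have "connectedin (subtopology (thick_space X r) {q \<in> topspace (thick_space X r). thick_F f q = thick_F f z}) S"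
    using assms(1) by (simp add: connectedin_subtopology)
  then show ?thesis unfolding thick_cls_def using assms(2) by (rule connected_component_of_maximal)
qed

lemma thick_fun_cls: "z \<in> topspace (thick_space X r) \<Longrightarrow> thick_fun f (thick_cls X f r z) = thick_F f z"
proof -
  assume z: "z \<in> topspace (thick_space X r)"
  have "(SOME p. p \<in> thick_cls X f r z) \<in> thick_cls X f r z" using cls_mem[OF z] by (rule someI)
  then show ?thesis unfolding thick_fun_def using cls_sub by blast
qed

lemma topspace_thick: "topspace (thick X f r) = thick_cls X f r ` topspace (thick_space X r)"
  by (simp add: thick_def topspace_quot)

lemma cont_cls: "continuous_map (thick_space X r) (thick X f r) (thick_cls X f r)"
  by (simp add: thick_def cont_quot)

lemma openin_thick: "openin (thick X f r) U \<longleftrightarrow> U \<subseteq> thick_cls X f r ` topspace (thick_space X r) \<and>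
   openin (thick_space X r) {z \<in> topspace (thick_space X r). thick_cls X f r z \<in> U}"
  by (simp add: thick_def openin_quot)

lemma morph_rep: assumes "reeb_morphism X f (thick Y g r) (thick_fun g) h" "x \<in> topspace X"
  shows "\<exists>z\<in>topspace (thick_space Y r). h x = thick_cls Y g r z \<and> thick_F g z = f x"
proof -
  have cm: "continuous_map X (thick Y g r) h" and fv: "thick_fun g (h x) = f x"
    using assms unfolding reeb_morphism_def by auto
  have "h x \<in> topspace (thick Y g r)" using continuous_map_funspace[OF cm] assms(2) by (rule funcset_mem)
  then obtain z where z: "z \<in> topspace (thick_space Y r)" "h x = thick_cls Y g r z"
    unfolding topspace_thick by (rule imageE) 
  have "thick_F g z = f x" using fv z thick_fun_cls[OF z(1), of g] by simp
  then show ?thesis using z by blast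
qed

lemma morph_elem: assumes "reeb_morphism X f (thick Y g r) (thick_fun g) h" "x \<in> topspace X" "w \<in> h x"
  shows "w \<in> topspace (thick_space Y r) \<and> thick_F g w = f x"
proof -
  obtain z where "h x = thick_cls Y g r z" "thick_F g z = f x" using morph_rep[OF assms(1,2)] by blast
  then show ?thesis using assms(3) cls_sub[of w Y g r z] by simp
qed

lemma morph_ne: assumes "reeb_morphism X f (thick Y g r) (thick_fun g) h" "x \<in> topspace X"
  shows "\<exists>w. w \<in> h x"
proof -
  obtain z where "z \<in> topspace (thick_space Y r)" "h x = thick_cls Y g r z" using morph_rep[OF assms] by blast
  then show ?thesis using cls_mem by blast
qed

lemma open_cls_image: assumes "openin (thick_space X r) P" "\<forall>z\<in>P. thick_cls X f r z \<subseteq> P"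
  shows "openin (thick X f r) (thick_cls X f r ` P)"
proof -
  have P: "P \<subseteq> topspace (thick_space X r)" using assms(1) openin_subset by blast
  have "{z \<in> topspace (thick_space X r). thick_cls X f r z \<in> thick_cls X f r ` P} = P"
  proof
    show "P \<subseteq> {z \<in> topspace (thick_space X r). thick_cls X f r z \<in> thick_cls X f r ` P}" using P by blast
    show "{z \<in> topspace (thick_space X r). thick_cls X f r z \<in> thick_cls X f r ` P} \<subseteq> P"
    proof
      fix z assume "z \<in> {z \<in> topspace (thick_space X r). thick_cls X f r z \<in> thick_cls X f r ` P}"
      then obtain z' where "z \<in> topspace (thick_space X r)" "z' \<in> P" "thick_cls X f r z = thick_cls X f r z'" by blast
      then show "z \<in> P" using cls_mem assms(2) by blast
    qed
  qed
  then show ?thesis unfolding openin_thick using assms(1) P by auto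
qed

lemma sep: assumes "connectedin T S" "openin T P" "openin T Q" "S \<subseteq> P \<union> Q" "P \<inter> Q \<inter> S = {}" "z \<in> S" "z \<in> P"
  shows "S \<subseteq> P"
proof (rule ccontr)
  assume "\<not> S \<subseteq> P"
  then have "Q \<inter> S \<noteq> {}" using assms(4) by blast
  moreover have "P \<inter> S \<noteq> {}" using assms(6,7) by blast
  ultimately show False using connectedinD[OF assms(1,2,3,4,5)] by blast
qed

lemma pull_open: "continuous_map X Y h \<Longrightarrow> openin Y U \<Longrightarrow> openin X {x \<in> topspace X. h x \<in> U}"
  by (simp add: continuous_map_def)




lemma ext_unfold:
  assumes hm: "reeb_morphism X f (thick Y g \<epsilon>) (thick_fun g) h" and C: "C \<in> topspace (thick X f \<epsilon>)"
  obtains p q where "p \<in> C" "q \<in> h (fst p)"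
    "reeb_ext Y g \<epsilon> h C = thick_cls Y g (2*\<epsilon>) (fst q, snd q + snd p)"
    "p \<in> topspace (thick_space X \<epsilon>)" "thick_F f p = thick_fun f C"
    "q \<in> topspace (thick_space Y \<epsilon>)" "thick_F g q = f (fst p)"
proof -
  obtain z where z: "z \<in> topspace (thick_space X \<epsilon>)" "C = thick_cls X f \<epsilon> z"
    using C unfolding topspace_thick by (rule imageE)
  define p where "p = (SOME p. p \<in> C)"
  have pC: "p \<in> C" unfolding p_def using cls_mem[OF z(1)] z(2) by (metis someI)
  have p1: "p \<in> topspace (thick_space X \<epsilon>)" "thick_F f p = thick_F f z" using cls_sub[of p X f \<epsilon> z] pC z(2) by auto
  have p2: "thick_F f p = thick_fun f C" using p1 z thick_fun_cls[OF z(1)] by simp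
  have fp: "fst p \<in> topspace X" using p1(1) by (auto simp: topspace_TS)
  define q where "q = (SOME q. q \<in> h (fst p))"
  have qh: "q \<in> h (fst p)" unfolding q_def using morph_ne[OF hm fp] by (metis someI)
  have q1: "q \<in> topspace (thick_space Y \<epsilon>) \<and> thick_F g q = f (fst p)" using morph_elem[OF hm fp qh] .
  have "reeb_ext Y g \<epsilon> h C = thick_cls Y g (2*\<epsilon>) (fst q, snd q + snd p)"
    unfolding reeb_ext_def Let_def p_def[symmetric] q_def[symmetric] ..
  then show ?thesis using that pC qh p1 p2 q1 by blast
qed

lemma ext_rep:
  assumes hm: "reeb_morphism X f (thick Y g \<epsilon>) (thick_fun g) h" and C: "C \<in> topspace (thick X f \<epsilon>)"
  shows "\<exists>w \<in> topspace (thick_space Y (2*\<epsilon>)). reeb_ext Y g \<epsilon> h C = thick_cls Y g (2*\<epsilon>) w \<and> thick_F g w = thick_fun f C"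
proof -
  obtain p q where pq: "p \<in> C" "q \<in> h (fst p)"
    "reeb_ext Y g \<epsilon> h C = thick_cls Y g (2*\<epsilon>) (fst q, snd q + snd p)"
    "p \<in> topspace (thick_space X \<epsilon>)" "thick_F f p = thick_fun f C"
    "q \<in> topspace (thick_space Y \<epsilon>)" "thick_F g q = f (fst p)"
    using ext_unfold[OF hm C] by blast
  have "(fst q, snd q + snd p) \<in> topspace (thick_space Y (2*\<epsilon>))"
    using pq(4,6) by (auto simp: topspace_TS)
  moreover have "thick_F g (fst q, snd q + snd p) = thick_fun f C"
    using pq(5,7) by (simp add: thick_F_def)
  ultimately show ?thesis using pq(3) by blast
qed

lemma level_cls:
  assumes "connectedin (thick_space X r) {w \<in> topspace (thick_space X r). thick_F f w = thick_F f z}"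
    "z \<in> topspace (thick_space X r)"
  shows "thick_cls X f r z = {w \<in> topspace (thick_space X r). thick_F f w = thick_F f z}"
proof
  show "thick_cls X f r z \<subseteq> {w \<in> topspace (thick_space X r). thick_F f w = thick_F f z}"
    using cls_sub by blast
  show "{w \<in> topspace (thick_space X r). thick_F f w = thick_F f z} \<subseteq> thick_cls X f r z"
    by (rule cls_max[OF assms(1)]) (use assms(2) in auto)
qed

lemma TS_R1: "thick_space (edge_space \<alpha>) r = top_of_set ({0..\<alpha>} \<times> {-r..r})"
  by (simp add: thick_space_def edge_space_def)

definition Lp :: "real \<Rightarrow> (real \<times> real) set" where
  "Lp \<alpha> = {(t, y). 0 \<le> t \<and> t \<le> \<alpha> \<and> (y = t * (\<alpha> - t) \<or> y = - (t * (\<alpha> - t)))}"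

lemma TS_R2: "thick_space (loop_space \<alpha>) r = top_of_set (Lp \<alpha> \<times> {-r..r})"
  by (simp add: thick_space_def loop_space_def Lp_def)

lemma R1_level:
  assumes "z \<in> topspace (thick_space (edge_space \<alpha>) r)"
  shows "thick_cls (edge_space \<alpha>) (\<lambda>t. t) r z = {w \<in> topspace (thick_space (edge_space \<alpha>) r). thick_F (\<lambda>t. t) w = thick_F (\<lambda>t. t) z}"
proof (rule level_cls[OF _ assms])
  define c where "c = thick_F (\<lambda>t. t) z"
  have e: "{w \<in> topspace (thick_space (edge_space \<alpha>) r). thick_F (\<lambda>t. t) w = c} = {w. 0 \<le> fst w \<and> fst w \<le> \<alpha> \<and> -r \<le> snd w \<and> snd w \<le> r \<and> fst w + snd w = c}"
    by (auto simp: TS_R1 thick_F_def)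
  have cv: "convex {w::real\<times>real. 0 \<le> fst w \<and> fst w \<le> \<alpha> \<and> -r \<le> snd w \<and> snd w \<le> r \<and> fst w + snd w = c}"
  proof (rule convexI)
    fix x y :: "real\<times>real" and u v :: real
    assume x: "x \<in> {w. 0 \<le> fst w \<and> fst w \<le> \<alpha> \<and> -r \<le> snd w \<and> snd w \<le> r \<and> fst w + snd w = c}"
      and y: "y \<in> {w. 0 \<le> fst w \<and> fst w \<le> \<alpha> \<and> -r \<le> snd w \<and> snd w \<le> r \<and> fst w + snd w = c}"
      and uv0: "0 \<le> u" "0 \<le> v" "u + v = 1"
    have uv: "0 \<le> u \<and> 0 \<le> v \<and> u + v = 1" using uv0 by simp
    obtain a b where xab: "x = (a,b)" by fastforce
    obtain a' b' where yab: "y = (a',b')" by fastforce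
    have h: "0 \<le> a" "a \<le> \<alpha>" "-r \<le> b" "b \<le> r" "a + b = c" "0 \<le> a'" "a' \<le> \<alpha>" "-r \<le> b'" "b' \<le> r" "a' + b' = c"
      using x y xab yab by auto
    have v: "v = 1 - u" using uv by simp
    have "0 \<le> u*a + (1-u)*a'" using h uv by (simp add: v)
    moreover have "u*a + (1-u)*a' \<le> \<alpha>" using h uv convex_bound_le[of a \<alpha> a' u "1-u"] by simp
    moreover have "-r \<le> u*b + (1-u)*b'" using h uv convex_bound_le[of "-b" r "-b'" u "1-u"] by (simp add: algebra_simps)
    moreover have "u*b + (1-u)*b' \<le> r" using h uv convex_bound_le[of b r b' u "1-u"] by simp
    moreover have "u*a + (1-u)*a' + (u*b + (1-u)*b') = c"
    proof -
      have "u*a + (1-u)*a' + (u*b + (1-u)*b') = u*(a+b) + (1-u)*(a'+b')" by (simp add: algebra_simps)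
      also have "\<dots> = c" using h by (simp add: algebra_simps)
      finally show ?thesis .
    qed
    ultimately show "u *\<^sub>R x + v *\<^sub>R y \<in> {w. 0 \<le> fst w \<and> fst w \<le> \<alpha> \<and> -r \<le> snd w \<and> snd w \<le> r \<and> fst w + snd w = c}"
      using xab yab v by simp
  qed
  show "connectedin (thick_space (edge_space \<alpha>) r) {w \<in> topspace (thick_space (edge_space \<alpha>) r). thick_F (\<lambda>t. t) w = c}"
    unfolding e unfolding TS_R1 connectedin_subtopology
    using convex_connected[OF cv] by auto
qed




lemma R2_nonzero:
  assumes "w \<in> topspace (thick_space (loop_space \<alpha>) r)" "r < thick_F fst w" "thick_F fst w < \<alpha> - r"
  shows "snd (fst w) \<noteq> 0"
proof -
  obtain a b s where w: "w = ((a,b),s)" by (metis prod.exhaust)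
  have h: "(a,b) \<in> Lp \<alpha>" "-r \<le> s" "s \<le> r" using assms(1) w by (auto simp: TS_R2)
  have "r < a + s" "a + s < \<alpha> - r" using assms(2,3) w by (auto simp: thick_F_def)
  then have a: "0 < a" "a < \<alpha>" using h by auto
  then have "0 < a * (\<alpha> - a)" by simp
  then show ?thesis using h(1) w unfolding Lp_def by auto
qed

lemma open_TS_R2_pos: "openin (thick_space (loop_space \<alpha>) r) {w \<in> topspace (thick_space (loop_space \<alpha>) r). 0 < snd (fst w)}"
proof -
  have "open {w::(real\<times>real)\<times>real. 0 < snd (fst w)}"
    by (rule open_Collect_less) (intro continuous_intros)+
  then have "openin (top_of_set (Lp \<alpha> \<times> {-r..r})) ((Lp \<alpha> \<times> {-r..r}) \<inter> {w. 0 < snd (fst w)})"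
    by (rule openin_open_Int)
  moreover have "{w \<in> topspace (thick_space (loop_space \<alpha>) r). 0 < snd (fst w)} = (Lp \<alpha> \<times> {-r..r}) \<inter> {w. 0 < snd (fst w)}"
    by (auto simp: TS_R2)
  ultimately show ?thesis by (simp add: TS_R2)
qed

lemma open_TS_R2_neg: "openin (thick_space (loop_space \<alpha>) r) {w \<in> topspace (thick_space (loop_space \<alpha>) r). snd (fst w) < 0}"
proof -
  have "open {w::(real\<times>real)\<times>real. snd (fst w) < 0}"
    by (rule open_Collect_less) (intro continuous_intros)+
  then have "openin (top_of_set (Lp \<alpha> \<times> {-r..r})) ((Lp \<alpha> \<times> {-r..r}) \<inter> {w. snd (fst w) < 0})"
    by (rule openin_open_Int)
  moreover have "{w \<in> topspace (thick_space (loop_space \<alpha>) r). snd (fst w) < 0} = (Lp \<alpha> \<times> {-r..r}) \<inter> {w. snd (fst w) < 0}"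
    by (auto simp: TS_R2)
  ultimately show ?thesis by (simp add: TS_R2)
qed

lemma R2_sign:
  assumes z: "z \<in> topspace (thick_space (loop_space \<alpha>) r)" and lv: "r < thick_F fst z" "thick_F fst z < \<alpha> - r"
    and w: "w \<in> thick_cls (loop_space \<alpha>) fst r z"
  shows "(0 < snd (fst w)) = (0 < snd (fst z))" "snd (fst w) \<noteq> 0"
proof -
  let ?T = "thick_space (loop_space \<alpha>) r"
  let ?C = "thick_cls (loop_space \<alpha>) fst r z"
  let ?P = "{w \<in> topspace ?T. 0 < snd (fst w)}"
  let ?Q = "{w \<in> topspace ?T. snd (fst w) < 0}"
  have nz: "snd (fst w') \<noteq> 0" if "w' \<in> ?C" for w'
    using cls_sub[OF that] R2_nonzero[of w' \<alpha> r] lv by auto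
  have cov: "?C \<subseteq> ?P \<union> ?Q"
  proof
    fix w' assume "w' \<in> ?C"
    then show "w' \<in> ?P \<union> ?Q" using nz[of w'] cls_sub[of w'] by (auto simp: neq_iff)
  qed
  have dis: "?P \<inter> ?Q \<inter> ?C = {}" by auto
  have zC: "z \<in> ?C" using cls_mem[OF z] .
  show "snd (fst w) \<noteq> 0" using nz[OF w] .
  show "(0 < snd (fst w)) = (0 < snd (fst z))"
  proof (cases "0 < snd (fst z)")
    case True
    then have "z \<in> ?P" using z by simp
    then have "?C \<subseteq> ?P" using sep[OF cls_conn open_TS_R2_pos open_TS_R2_neg cov dis zC] by blast
    then show ?thesis using w True by auto
  next
    case False
    then have "z \<in> ?Q" using z nz[OF zC] by (simp add: neq_iff)
    have dis': "?Q \<inter> ?P \<inter> ?C = {}" by auto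
    have cov': "?C \<subseteq> ?Q \<union> ?P" using cov by blast
    have "?C \<subseteq> ?Q" using sep[OF cls_conn open_TS_R2_neg open_TS_R2_pos cov' dis' zC \<open>z \<in> ?Q\<close>] .
    then show ?thesis using w False by auto
  qed
qed




lemma R2_level:
  assumes a: "\<alpha> > 0" and z: "z \<in> topspace (thick_space (loop_space \<alpha>) (\<alpha>/2))"
  shows "thick_cls (loop_space \<alpha>) fst (\<alpha>/2) z = {w \<in> topspace (thick_space (loop_space \<alpha>) (\<alpha>/2)). thick_F fst w = thick_F fst z}"
proof (rule level_cls[OF _ z])
  define r where "r = \<alpha>/2"
  define c where "c = thick_F fst z"
  define lo where "lo = max 0 (c - r)"
  define hi where "hi = min \<alpha> (c + r)"
  define U where "U = (\<lambda>a. ((a, a*(\<alpha>-a)), c - a)) ` {lo..hi}"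
  define D where "D = (\<lambda>a. ((a, -(a*(\<alpha>-a))), c - a)) ` {lo..hi}"
  obtain a0 b0 s0 where zz: "z = ((a0,b0),s0)" by (metis prod.exhaust)
  have z1: "(a0,b0) \<in> Lp \<alpha>" "-r \<le> s0" "s0 \<le> r" using z zz by (auto simp: TS_R2 r_def)
  have cz: "c = a0 + s0" using zz by (simp add: c_def thick_F_def)
  have z2: "0 \<le> a0" "a0 \<le> \<alpha>" using z1(1) by (auto simp: Lp_def)
  have lohi: "lo \<le> hi" using z1 z2 cz a unfolding lo_def hi_def by auto
  have e: "{w \<in> topspace (thick_space (loop_space \<alpha>) (\<alpha>/2)). thick_F fst w = c} = U \<union> D"
  proof
    show "{w \<in> topspace (thick_space (loop_space \<alpha>) (\<alpha>/2)). thick_F fst w = c} \<subseteq> U \<union> D"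
    proof
      fix w assume w: "w \<in> {w \<in> topspace (thick_space (loop_space \<alpha>) (\<alpha>/2)). thick_F fst w = c}"
      obtain a b s where ww: "w = ((a,b),s)" by (metis prod.exhaust)
      have w1: "(a,b) \<in> Lp \<alpha>" "-r \<le> s" "s \<le> r" "a + s = c" using w ww by (auto simp: TS_R2 r_def thick_F_def)
      have w2: "0 \<le> a" "a \<le> \<alpha>" "b = a*(\<alpha>-a) \<or> b = -(a*(\<alpha>-a))" using w1(1) by (auto simp: Lp_def)
      have ain: "a \<in> {lo..hi}" using w1 w2 unfolding lo_def hi_def by auto
      have s: "s = c - a" using w1 by simp
      show "w \<in> U \<union> D"
      proof (cases "b = a*(\<alpha>-a)")
        case True
        then have "w = (\<lambda>a. ((a, a*(\<alpha>-a)), c - a)) a" using ww s by simp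
        then show ?thesis using ain unfolding U_def by blast
      next
        case False
        then have "w = (\<lambda>a. ((a, -(a*(\<alpha>-a))), c - a)) a" using ww s w2(3) by simp
        then show ?thesis using ain unfolding D_def by blast
      qed
    qed
    show "U \<union> D \<subseteq> {w \<in> topspace (thick_space (loop_space \<alpha>) (\<alpha>/2)). thick_F fst w = c}"
    proof
      fix w assume "w \<in> U \<union> D"
      then obtain a where ain: "a \<in> {lo..hi}" and ww: "w = ((a, a*(\<alpha>-a)), c - a) \<or> w = ((a, -(a*(\<alpha>-a))), c - a)"
        unfolding U_def D_def by blast
      have "0 \<le> a" "a \<le> \<alpha>" "-r \<le> c - a" "c - a \<le> r" using ain unfolding lo_def hi_def by auto
      then show "w \<in> {w \<in> topspace (thick_space (loop_space \<alpha>) (\<alpha>/2)). thick_F fst w = c}"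
        using ww by (auto simp: TS_R2 Lp_def thick_F_def r_def)
    qed
  qed
  have cU: "connected U" unfolding U_def by (rule connected_continuous_image) (intro continuous_intros, simp)
  have cD: "connected D" unfolding D_def by (rule connected_continuous_image) (intro continuous_intros, simp)
  have ne: "U \<inter> D \<noteq> {}"
  proof (cases "c \<le> r")
    case True
    then have "lo = 0" unfolding lo_def by simp
    then have "((0, 0), c) \<in> U" "((0, 0), c) \<in> D" using lohi unfolding U_def D_def
      by (auto intro!: image_eqI[where x=0])
    then show ?thesis by blast
  next
    case False
    then have "hi = \<alpha>" unfolding hi_def r_def by simp
    then have "((\<alpha>, 0), c - \<alpha>) \<in> U" "((\<alpha>, 0), c - \<alpha>) \<in> D" using lohi unfolding U_def D_def
      by (auto intro!: image_eqI[where x=\<alpha>])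
    then show ?thesis by blast
  qed
  have "connected (U \<union> D)" using connected_Un[OF cU cD ne] .
  then show "connectedin (thick_space (loop_space \<alpha>) (\<alpha>/2)) {w \<in> topspace (thick_space (loop_space \<alpha>) (\<alpha>/2)). thick_F fst w = thick_F fst z}"
    unfolding c_def[symmetric] e using e unfolding TS_R2 connectedin_subtopology by auto
qed

lemma cont_into_thick: "continuous_map X (thick_space Y r) k \<Longrightarrow> continuous_map X (thick Y g r) (\<lambda>x. thick_cls Y g r (k x))"
  using continuous_map_compose[OF _ cont_cls] by (simp add: o_def)

lemma part1_upper:
  assumes a: "\<alpha> > 0"
  shows "interleaved (edge_space \<alpha>) (\<lambda>t. t) (loop_space \<alpha>) fst (\<alpha>/4)"
proof -
  define \<phi> where "\<phi> = (\<lambda>t. thick_cls (loop_space \<alpha>) fst (\<alpha>/4) ((t, t*(\<alpha>-t)), 0))"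
  define \<psi> where "\<psi> = (\<lambda>y::real\<times>real. thick_cls (edge_space \<alpha>) (\<lambda>t. t) (\<alpha>/4) (fst y, 0))"
  have k1: "continuous_map (edge_space \<alpha>) (thick_space (loop_space \<alpha>) (\<alpha>/4)) (\<lambda>t. ((t, t*(\<alpha>-t)), 0::real))"
    unfolding TS_R2 edge_space_def continuous_map_subtopology_eu
    using a by (auto intro!: continuous_intros simp: Lp_def)
  have k2: "continuous_map (loop_space \<alpha>) (thick_space (edge_space \<alpha>) (\<alpha>/4)) (\<lambda>y. (fst y, 0::real))"
    unfolding TS_R1 loop_space_def continuous_map_subtopology_eu
    using a by (auto intro!: continuous_intros)
  have m1: "reeb_morphism (edge_space \<alpha>) (\<lambda>t. t) (thick (loop_space \<alpha>) fst (\<alpha>/4)) (thick_fun fst) \<phi>"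
    unfolding reeb_morphism_def
  proof
    show "continuous_map (edge_space \<alpha>) (thick (loop_space \<alpha>) fst (\<alpha>/4)) \<phi>" unfolding \<phi>_def by (rule cont_into_thick[OF k1])
    show "\<forall>x\<in>topspace (edge_space \<alpha>). thick_fun fst (\<phi> x) = x"
    proof
      fix x assume "x \<in> topspace (edge_space \<alpha>)"
      then have "((x, x*(\<alpha>-x)), 0::real) \<in> topspace (thick_space (loop_space \<alpha>) (\<alpha>/4))"
        by (rule funcset_mem[OF continuous_map_funspace[OF k1]])
      then show "thick_fun fst (\<phi> x) = x" unfolding \<phi>_def by (simp add: thick_fun_cls thick_F_def)
    qed
  qed
  have m2: "reeb_morphism (loop_space \<alpha>) fst (thick (edge_space \<alpha>) (\<lambda>t. t) (\<alpha>/4)) (thick_fun (\<lambda>t. t)) \<psi>"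
    unfolding reeb_morphism_def
  proof
    show "continuous_map (loop_space \<alpha>) (thick (edge_space \<alpha>) (\<lambda>t. t) (\<alpha>/4)) \<psi>" unfolding \<psi>_def by (rule cont_into_thick[OF k2])
    show "\<forall>x\<in>topspace (loop_space \<alpha>). thick_fun (\<lambda>t. t) (\<psi> x) = fst x"
    proof
      fix x assume "x \<in> topspace (loop_space \<alpha>)"
      then have "(fst x, 0::real) \<in> topspace (thick_space (edge_space \<alpha>) (\<alpha>/4))"
        by (rule funcset_mem[OF continuous_map_funspace[OF k2]])
      then show "thick_fun (\<lambda>t. t) (\<psi> x) = fst x" unfolding \<psi>_def by (simp add: thick_fun_cls thick_F_def)
    qed
  qed
  have e1: "reeb_ext (loop_space \<alpha>) fst (\<alpha>/4) \<phi> (\<psi> y) = reeb_shift (loop_space \<alpha>) fst (2 * (\<alpha>/4)) y"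
    if y: "y \<in> topspace (loop_space \<alpha>)" for y
  proof -
    have Cy: "\<psi> y \<in> topspace (thick (edge_space \<alpha>) (\<lambda>t. t) (\<alpha>/4))"
      using m2 unfolding reeb_morphism_def by (intro funcset_mem[OF continuous_map_funspace y]) blast
    obtain w where w: "w \<in> topspace (thick_space (loop_space \<alpha>) (2*(\<alpha>/4)))"
      "reeb_ext (loop_space \<alpha>) fst (\<alpha>/4) \<phi> (\<psi> y) = thick_cls (loop_space \<alpha>) fst (2*(\<alpha>/4)) w"
      "thick_F fst w = thick_fun (\<lambda>t. t) (\<psi> y)"
      using ext_rep[OF m1 Cy] by blast
    have fy: "thick_fun (\<lambda>t. t) (\<psi> y) = fst y" using m2 y unfolding reeb_morphism_def by blast
    have y0: "(y, 0) \<in> topspace (thick_space (loop_space \<alpha>) (2*(\<alpha>/4)))" using y a by (simp add: topspace_TS)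
    have h2: "2*(\<alpha>/4) = \<alpha>/2" by simp
    have "thick_cls (loop_space \<alpha>) fst (2*(\<alpha>/4)) w = thick_cls (loop_space \<alpha>) fst (2*(\<alpha>/4)) (y,0)"
      using R2_level[OF a, of w] R2_level[OF a, of "(y,0)"] w(1) y0 w(3) fy unfolding h2
      by (simp add: thick_F_def)
    then show ?thesis using w(2) unfolding reeb_shift_def by simp
  qed
  have e2: "reeb_ext (edge_space \<alpha>) (\<lambda>t. t) (\<alpha>/4) \<psi> (\<phi> x) = reeb_shift (edge_space \<alpha>) (\<lambda>t. t) (2 * (\<alpha>/4)) x"
    if x: "x \<in> topspace (edge_space \<alpha>)" for x
  proof -
    have Cx: "\<phi> x \<in> topspace (thick (loop_space \<alpha>) fst (\<alpha>/4))"
      using m1 unfolding reeb_morphism_def by (intro funcset_mem[OF continuous_map_funspace x]) blast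
    obtain w where w: "w \<in> topspace (thick_space (edge_space \<alpha>) (2*(\<alpha>/4)))"
      "reeb_ext (edge_space \<alpha>) (\<lambda>t. t) (\<alpha>/4) \<psi> (\<phi> x) = thick_cls (edge_space \<alpha>) (\<lambda>t. t) (2*(\<alpha>/4)) w"
      "thick_F (\<lambda>t. t) w = thick_fun fst (\<phi> x)"
      using ext_rep[OF m2 Cx] by blast
    have fx: "thick_fun fst (\<phi> x) = x" using m1 x unfolding reeb_morphism_def by blast
    have x0: "(x, 0) \<in> topspace (thick_space (edge_space \<alpha>) (2*(\<alpha>/4)))" using x a by (simp add: topspace_TS)
    have "thick_cls (edge_space \<alpha>) (\<lambda>t. t) (2*(\<alpha>/4)) w = thick_cls (edge_space \<alpha>) (\<lambda>t. t) (2*(\<alpha>/4)) (x,0)"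
      using R1_level[of w] R1_level[of "(x,0)"] w(1) x0 w(3) fx
      by (simp add: thick_F_def)
    then show ?thesis using w(2) unfolding reeb_shift_def by simp
  qed
  show ?thesis unfolding interleaved_def using m1 m2 e1 e2 by blast
qed




lemma part1_lower:
  assumes a: "\<alpha> > 0" and e0: "\<epsilon> \<ge> 0" and il: "interleaved (edge_space \<alpha>) (\<lambda>t. t) (loop_space \<alpha>) fst \<epsilon>"
  shows "\<alpha>/4 \<le> \<epsilon>"
proof (rule ccontr)
  assume "\<not> \<alpha>/4 \<le> \<epsilon>"
  then have lt: "\<epsilon> < \<alpha>/4" by simp
  obtain \<phi> \<psi> where m1: "reeb_morphism (edge_space \<alpha>) (\<lambda>t. t) (thick (loop_space \<alpha>) fst \<epsilon>) (thick_fun fst) \<phi>"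
    and m2: "reeb_morphism (loop_space \<alpha>) fst (thick (edge_space \<alpha>) (\<lambda>t. t) \<epsilon>) (thick_fun (\<lambda>t. t)) \<psi>"
    and eq: "\<forall>y\<in>topspace (loop_space \<alpha>). reeb_ext (loop_space \<alpha>) fst \<epsilon> \<phi> (\<psi> y) = reeb_shift (loop_space \<alpha>) fst (2 * \<epsilon>) y"
    using il unfolding interleaved_def by blast
  define pp where "pp = (\<alpha>/2, \<alpha>/2*(\<alpha>-\<alpha>/2))"
  define qq where "qq = (\<alpha>/2, -(\<alpha>/2*(\<alpha>-\<alpha>/2)))"
  have pT: "pp \<in> topspace (loop_space \<alpha>)" "qq \<in> topspace (loop_space \<alpha>)" using a
    by (auto simp: pp_def qq_def loop_space_def)
  obtain z where z: "z \<in> topspace (thick_space (edge_space \<alpha>) \<epsilon>)" "\<psi> pp = thick_cls (edge_space \<alpha>) (\<lambda>t. t) \<epsilon> z" "thick_F (\<lambda>t. t) z = fst pp"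
    using morph_rep[OF m2 pT(1)] by blast
  obtain z' where z': "z' \<in> topspace (thick_space (edge_space \<alpha>) \<epsilon>)" "\<psi> qq = thick_cls (edge_space \<alpha>) (\<lambda>t. t) \<epsilon> z'" "thick_F (\<lambda>t. t) z' = fst qq"
    using morph_rep[OF m2 pT(2)] by blast
  have "\<psi> pp = \<psi> qq" using z z' R1_level[OF z(1)] R1_level[OF z'(1)] by (simp add: pp_def qq_def)
  then have "reeb_shift (loop_space \<alpha>) fst (2 * \<epsilon>) pp = reeb_shift (loop_space \<alpha>) fst (2 * \<epsilon>) qq"
    using eq pT by metis
  then have ceq: "thick_cls (loop_space \<alpha>) fst (2*\<epsilon>) (pp,0) = thick_cls (loop_space \<alpha>) fst (2*\<epsilon>) (qq,0)"
    unfolding reeb_shift_def .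
  have p0: "(pp,0) \<in> topspace (thick_space (loop_space \<alpha>) (2*\<epsilon>))" "(qq,0) \<in> topspace (thick_space (loop_space \<alpha>) (2*\<epsilon>))"
    using pT e0 by (auto simp: topspace_TS)
  have "(pp,0) \<in> thick_cls (loop_space \<alpha>) fst (2*\<epsilon>) (qq,0)" using cls_mem[OF p0(1), of fst] ceq by simp
  moreover have "2*\<epsilon> < thick_F fst (qq,0::real)" "thick_F fst (qq,0::real) < \<alpha> - 2*\<epsilon>"
    using lt by (auto simp: thick_F_def qq_def)
  ultimately have "(0 < snd (fst (pp,0::real))) = (0 < snd (fst (qq,0::real)))"
    using R2_sign(1)[OF p0(2)] by blast
  moreover have "0 < snd pp" "\<not> 0 < snd qq" using a by (auto simp: pp_def qq_def)
  ultimately show False by simp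
qed

lemma part1:
  assumes a: "\<alpha> > 0"
  shows "interleaving_distance (edge_space \<alpha>) (\<lambda>t. t) (loop_space \<alpha>) fst = ereal (\<alpha> / 4)"
  unfolding interleaving_distance_def
proof (rule antisym)
  have "ereal (\<alpha>/4) \<in> {ereal \<epsilon> |\<epsilon>. 0 \<le> \<epsilon> \<and> interleaved (edge_space \<alpha>) (\<lambda>t. t) (loop_space \<alpha>) fst \<epsilon>}"
    using part1_upper[OF a] a by (intro CollectI exI[where x="\<alpha>/4"]) simp
  then show "Inf {ereal \<epsilon> |\<epsilon>. 0 \<le> \<epsilon> \<and> interleaved (edge_space \<alpha>) (\<lambda>t. t) (loop_space \<alpha>) fst \<epsilon>} \<le> ereal (\<alpha>/4)"
    by (rule Inf_lower)
  show "ereal (\<alpha>/4) \<le> Inf {ereal \<epsilon> |\<epsilon>. 0 \<le> \<epsilon> \<and> interleaved (edge_space \<alpha>) (\<lambda>t. t) (loop_space \<alpha>) fst \<epsilon>}"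
  proof (rule Inf_greatest)
    fix x assume "x \<in> {ereal \<epsilon> |\<epsilon>. 0 \<le> \<epsilon> \<and> interleaved (edge_space \<alpha>) (\<lambda>t. t) (loop_space \<alpha>) fst \<epsilon>}"
    then obtain \<epsilon> where "x = ereal \<epsilon>" "0 \<le> \<epsilon>" "interleaved (edge_space \<alpha>) (\<lambda>t. t) (loop_space \<alpha>) fst \<epsilon>" by blast
    then show "ereal (\<alpha>/4) \<le> x" using part1_lower[OF a] by simp
  qed
qed




lemma F_cont: "continuous_map X euclideanreal g \<Longrightarrow> continuous_map (thick_space X r) euclideanreal (thick_F g)"
proof -
  assume gc: "continuous_map X euclideanreal g"
  have 1: "continuous_map (thick_space X r) euclideanreal (\<lambda>w. g (fst w))"
    unfolding thick_space_def using continuous_map_compose[OF continuous_map_fst gc] by (simp add: o_def)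
  have 2: "continuous_map (thick_space X r) euclideanreal snd"
    unfolding thick_space_def by (rule continuous_map_into_fulltopology[OF continuous_map_snd])
  have "continuous_map (thick_space X r) euclideanreal (\<lambda>w. g (fst w) + snd w)"
    by (rule continuous_map_add[OF 1 2])
  then show ?thesis unfolding thick_F_def[abs_def] .
qed

lemma open_band: "continuous_map T euclideanreal h \<Longrightarrow> openin T {x \<in> topspace T. a < h x \<and> h x < b}"
proof -
  assume "continuous_map T euclideanreal h"
  then have "openin T {x \<in> topspace T. h x \<in> {a<..<b}}" by (rule pull_open) simp
  then show ?thesis by simp
qed

lemma open_lt: "continuous_map T euclideanreal h \<Longrightarrow> openin T {x \<in> topspace T. h x < b}"
proof -
  assume "continuous_map T euclideanreal h"
  then have "openin T {x \<in> topspace T. h x \<in> {..<b}}" by (rule pull_open) simp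
  then show ?thesis by simp
qed

lemma open_gt: "continuous_map T euclideanreal h \<Longrightarrow> openin T {x \<in> topspace T. b < h x}"
proof -
  assume "continuous_map T euclideanreal h"
  then have "openin T {x \<in> topspace T. h x \<in> {b<..}}" by (rule pull_open) simp
  then show ?thesis by simp
qed

lemma open_fst_pre: "openin X U \<Longrightarrow> openin (thick_space X r) {w \<in> topspace (thick_space X r). fst w \<in> U}"
  unfolding thick_space_def by (rule pull_open[OF continuous_map_fst])

lemma fst_cont_loop: "continuous_map (loop_space \<alpha>) euclideanreal fst"
  unfolding loop_space_def by (simp add: continuous_on_fst continuous_on_id)

lemma open_TS_R2_band:
  "openin (thick_space (loop_space \<alpha>) r) {z \<in> topspace (thick_space (loop_space \<alpha>) r). lo < thick_F fst z \<and> thick_F fst z < hi \<and> (if b then 0 < snd (fst z) else snd (fst z) < 0)}"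
proof -
  have A: "openin (thick_space (loop_space \<alpha>) r) {z \<in> topspace (thick_space (loop_space \<alpha>) r). lo < thick_F fst z \<and> thick_F fst z < hi}"
    by (rule open_band[OF F_cont[OF fst_cont_loop]])
  have B: "openin (thick_space (loop_space \<alpha>) r) {z \<in> topspace (thick_space (loop_space \<alpha>) r). (if b then 0 < snd (fst z) else snd (fst z) < 0)}"
    using open_TS_R2_pos open_TS_R2_neg by (cases b) auto
  have "openin (thick_space (loop_space \<alpha>) r) ({z \<in> topspace (thick_space (loop_space \<alpha>) r). lo < thick_F fst z \<and> thick_F fst z < hi} \<inter>
     {z \<in> topspace (thick_space (loop_space \<alpha>) r). (if b then 0 < snd (fst z) else snd (fst z) < 0)})"
    by (rule openin_Int[OF A B])
  moreover have "{z \<in> topspace (thick_space (loop_space \<alpha>) r). lo < thick_F fst z \<and> thick_F fst z < hi} \<inter>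
     {z \<in> topspace (thick_space (loop_space \<alpha>) r). (if b then 0 < snd (fst z) else snd (fst z) < 0)} =
     {z \<in> topspace (thick_space (loop_space \<alpha>) r). lo < thick_F fst z \<and> thick_F fst z < hi \<and> (if b then 0 < snd (fst z) else snd (fst z) < 0)}"
    by blast
  ultimately show ?thesis by simp
qed

locale P2 =
  fixes M :: "'m topology" and g :: "'m \<Rightarrow> real" and \<alpha> \<epsilon> \<delta> :: real
    and \<phi>1 \<psi>1 \<phi>2 \<psi>2
  assumes a: "\<alpha> > 0" and gc: "continuous_map M euclideanreal g" and e0: "0 \<le> \<epsilon>" and d0: "0 \<le> \<delta>"
    and eb: "2*\<epsilon> + \<delta> < \<alpha>/2" and db: "3*\<delta> < \<alpha>/2"
    and m1: "reeb_morphism M g (thick (edge_space \<alpha>) (\<lambda>t. t) \<epsilon>) (thick_fun (\<lambda>t. t)) \<phi>1"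
    and n1: "reeb_morphism (edge_space \<alpha>) (\<lambda>t. t) (thick M g \<epsilon>) (thick_fun g) \<psi>1"
    and eqM1: "\<forall>x\<in>topspace M. reeb_ext M g \<epsilon> \<psi>1 (\<phi>1 x) = reeb_shift M g (2 * \<epsilon>) x"
    and m2: "reeb_morphism M g (thick (loop_space \<alpha>) fst \<delta>) (thick_fun fst) \<phi>2"
    and n2: "reeb_morphism (loop_space \<alpha>) fst (thick M g \<delta>) (thick_fun g) \<psi>2"
    and eqR2: "\<forall>y\<in>topspace (loop_space \<alpha>). reeb_ext (loop_space \<alpha>) fst \<delta> \<phi>2 (\<psi>2 y) = reeb_shift (loop_space \<alpha>) fst (2 * \<delta>) y"
begin

definition u :: "'m \<Rightarrow> bool" where "u x = (0 < snd (fst (SOME w. w \<in> \<phi>2 x)))"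

definition U :: "bool \<Rightarrow> 'm set" where "U b = {x \<in> topspace M. \<delta> < g x \<and> g x < \<alpha> - \<delta> \<and> u x = b}"

lemma u_sign:
  assumes x: "x \<in> topspace M" "\<delta> < g x" "g x < \<alpha> - \<delta>" and w: "w \<in> \<phi>2 x"
  shows "(0 < snd (fst w)) = u x" "snd (fst w) \<noteq> 0"
proof -
  obtain z where z: "z \<in> topspace (thick_space (loop_space \<alpha>) \<delta>)" "\<phi>2 x = thick_cls (loop_space \<alpha>) fst \<delta> z" "thick_F fst z = g x"
    using morph_rep[OF m2 x(1)] by blast
  have s: "(SOME w. w \<in> \<phi>2 x) \<in> \<phi>2 x" using cls_mem[OF z(1), of fst] z(2) by (metis someI)
  have lv: "\<delta> < thick_F fst z" "thick_F fst z < \<alpha> - \<delta>" using z(3) x by auto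
  have "(0 < snd (fst w)) = (0 < snd (fst z))" using R2_sign(1)[OF z(1) lv] w z(2) by simp
  moreover have "(0 < snd (fst (SOME w. w \<in> \<phi>2 x))) = (0 < snd (fst z))" using R2_sign(1)[OF z(1) lv] s z(2) by simp
  ultimately show "(0 < snd (fst w)) = u x" unfolding u_def by simp
  show "snd (fst w) \<noteq> 0" using R2_sign(2)[OF z(1) lv] w z(2) by simp
qed

lemma U_open: "openin M (U b)"
proof -
  let ?T = "thick_space (loop_space \<alpha>) \<delta>"
  let ?cls = "thick_cls (loop_space \<alpha>) fst \<delta>"
  define P where "P = {z \<in> topspace ?T. \<delta> < thick_F fst z \<and> thick_F fst z < \<alpha> - \<delta> \<and> (if b then 0 < snd (fst z) else snd (fst z) < 0)}"
  have Po: "openin ?T P" unfolding P_def by (rule open_TS_R2_band)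
  have Pc: "\<forall>z\<in>P. ?cls z \<subseteq> P"
  proof (intro ballI subsetI)
    fix z w assume z: "z \<in> P" and w: "w \<in> ?cls z"
    have zt: "z \<in> topspace ?T" and lv: "\<delta> < thick_F fst z" "thick_F fst z < \<alpha> - \<delta>" using z by (auto simp: P_def)
    have "(0 < snd (fst w)) = (0 < snd (fst z))" "snd (fst w) \<noteq> 0" using R2_sign[OF zt lv w] by auto
    moreover have "w \<in> topspace ?T" "thick_F fst w = thick_F fst z" using cls_sub[OF w] by auto
    ultimately show "w \<in> P" using z by (auto simp: P_def split: if_splits)
  qed
  have Wo: "openin (thick (loop_space \<alpha>) fst \<delta>) (?cls ` P)" by (rule open_cls_image[OF Po Pc])
  have pre: "openin M {x \<in> topspace M. \<phi>2 x \<in> ?cls ` P}"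
    using m2 Wo unfolding reeb_morphism_def by (blast intro: pull_open)
  have "{x \<in> topspace M. \<phi>2 x \<in> ?cls ` P} = U b"
  proof (intro set_eqI iffI)
    fix x assume "x \<in> {x \<in> topspace M. \<phi>2 x \<in> ?cls ` P}"
    then obtain z where x: "x \<in> topspace M" and z: "z \<in> P" "\<phi>2 x = ?cls z" by blast
    have zt: "z \<in> topspace ?T" using z by (simp add: P_def)
    have "thick_fun fst (\<phi>2 x) = g x" using m2 x unfolding reeb_morphism_def by blast
    then have gx: "g x = thick_F fst z" using z(2) thick_fun_cls[OF zt, of fst] by simp
    have lv: "\<delta> < g x" "g x < \<alpha> - \<delta>" using z gx by (auto simp: P_def)
    have "(0 < snd (fst z)) = u x" using u_sign(1)[OF x lv] cls_mem[OF zt, of fst] z(2) by simp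
    then show "x \<in> U b" using z x lv unfolding U_def P_def by (auto split: if_splits)
  next
    fix x assume xU: "x \<in> U b"
    then have x: "x \<in> topspace M" and lv: "\<delta> < g x" "g x < \<alpha> - \<delta>" and ub: "u x = b" by (auto simp: U_def)
    obtain z where z: "z \<in> topspace ?T" "\<phi>2 x = ?cls z" "thick_F fst z = g x"
      using morph_rep[OF m2 x] by blast
    have zx: "z \<in> \<phi>2 x" using cls_mem[OF z(1), of fst] z(2) by simp
    have "(0 < snd (fst z)) = b" "snd (fst z) \<noteq> 0" using u_sign[OF x lv zx] ub by auto
    then have "z \<in> P" using z lv unfolding P_def by (auto simp: neq_iff)
    then show "x \<in> {x \<in> topspace M. \<phi>2 x \<in> ?cls ` P}" using x z(2) by blast
  qed
  then show ?thesis using pre by simp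
qed

end




context P2 begin

lemma C1:
  assumes z: "z \<in> topspace (thick_space M r)" and lv: "\<delta> + r < thick_F g z" "thick_F g z < \<alpha> - \<delta> - r"
    and w: "w \<in> thick_cls M g r z"
  shows "fst w \<in> topspace M \<and> \<delta> < g (fst w) \<and> g (fst w) < \<alpha> - \<delta> \<and> u (fst w) = u (fst z)"
proof -
  let ?T = "thick_space M r"
  let ?C = "thick_cls M g r z"
  have gen: "fst w' \<in> topspace M \<and> \<delta> < g (fst w') \<and> g (fst w') < \<alpha> - \<delta>" if "w' \<in> ?C" for w'
  proof -
    have "w' \<in> topspace ?T" "thick_F g w' = thick_F g z" using cls_sub[OF that] by auto
    then have "fst w' \<in> topspace M" "-r \<le> snd w'" "snd w' \<le> r" "g (fst w') + snd w' = thick_F g z"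
      by (auto simp: topspace_TS thick_F_def)
    then show ?thesis using lv by auto
  qed
  define P where "P = (\<lambda>b. {w \<in> topspace ?T. fst w \<in> U b})"
  have Po: "openin ?T (P b)" for b unfolding P_def by (rule open_fst_pre[OF U_open])
  have cov: "?C \<subseteq> P (u (fst z)) \<union> P (\<not> u (fst z))"
  proof
    fix w' assume w': "w' \<in> ?C"
    then have "w' \<in> topspace ?T" using cls_sub by blast
    then show "w' \<in> P (u (fst z)) \<union> P (\<not> u (fst z))" using gen[OF w'] unfolding P_def U_def by auto
  qed
  have dis: "P (u (fst z)) \<inter> P (\<not> u (fst z)) \<inter> ?C = {}" unfolding P_def U_def by auto
  have zC: "z \<in> ?C" by (rule cls_mem[OF z])
  have zP: "z \<in> P (u (fst z))" using z gen[OF zC] unfolding P_def U_def by auto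
  have "?C \<subseteq> P (u (fst z))" by (rule sep[OF cls_conn Po Po cov dis zC zP])
  then show ?thesis using w gen[OF w] unfolding P_def U_def by auto
qed

definition v :: "real \<Rightarrow> bool" where "v t = u (fst (SOME w. w \<in> \<psi>1 t))"

definition J :: "real set" where "J = {\<delta>+\<epsilon><..<\<alpha>-\<delta>-\<epsilon>}"

lemma J_top: "t \<in> J \<Longrightarrow> t \<in> topspace (edge_space \<alpha>)"
  using e0 d0 by (auto simp: J_def edge_space_def)

lemma psi1_elem:
  assumes t: "t \<in> J" and w: "w \<in> \<psi>1 t"
  shows "fst w \<in> topspace M \<and> \<delta> < g (fst w) \<and> g (fst w) < \<alpha> - \<delta> \<and> u (fst w) = v t"
proof -
  obtain z where z: "z \<in> topspace (thick_space M \<epsilon>)" "\<psi>1 t = thick_cls M g \<epsilon> z" "thick_F g z = t"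
    using morph_rep[OF n1 J_top[OF t]] by blast
  have lv: "\<delta> + \<epsilon> < thick_F g z" "thick_F g z < \<alpha> - \<delta> - \<epsilon>" using t z(3) by (auto simp: J_def)
  have s: "(SOME w. w \<in> \<psi>1 t) \<in> \<psi>1 t" using cls_mem[OF z(1), of g] z(2) by (metis someI)
  have 1: "fst w \<in> topspace M \<and> \<delta> < g (fst w) \<and> g (fst w) < \<alpha> - \<delta> \<and> u (fst w) = u (fst z)"
    using C1[OF z(1) lv] w z(2) by simp
  have 2: "u (fst (SOME w. w \<in> \<psi>1 t)) = u (fst z)" using C1[OF z(1) lv] s z(2) by simp
  show ?thesis using 1 2 unfolding v_def by simp
qed

lemma v_const:
  assumes t1: "t1 \<in> J" and t2: "t2 \<in> J"
  shows "v t1 = v t2"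
proof -
  let ?T = "thick_space M \<epsilon>"
  let ?cls = "thick_cls M g \<epsilon>"
  define P where "P = (\<lambda>b. {w \<in> topspace ?T. \<delta>+\<epsilon> < thick_F g w \<and> thick_F g w < \<alpha>-\<delta>-\<epsilon> \<and> fst w \<in> U b})"
  have Po: "openin ?T (P b)" for b
  proof -
    have "openin ?T ({w \<in> topspace ?T. \<delta>+\<epsilon> < thick_F g w \<and> thick_F g w < \<alpha>-\<delta>-\<epsilon>} \<inter> {w \<in> topspace ?T. fst w \<in> U b})"
      by (rule openin_Int[OF open_band[OF F_cont[OF gc]] open_fst_pre[OF U_open]])
    moreover have "{w \<in> topspace ?T. \<delta>+\<epsilon> < thick_F g w \<and> thick_F g w < \<alpha>-\<delta>-\<epsilon>} \<inter> {w \<in> topspace ?T. fst w \<in> U b} = P b"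
      unfolding P_def by blast
    ultimately show ?thesis by simp
  qed
  have Pc: "\<forall>z\<in>P b. ?cls z \<subseteq> P b" for b
  proof (intro ballI subsetI)
    fix z w assume z: "z \<in> P b" and w: "w \<in> ?cls z"
    have zt: "z \<in> topspace ?T" and lv: "\<delta> + \<epsilon> < thick_F g z" "thick_F g z < \<alpha> - \<delta> - \<epsilon>" and zu: "fst z \<in> U b"
      using z by (auto simp: P_def)
    have 1: "fst w \<in> topspace M \<and> \<delta> < g (fst w) \<and> g (fst w) < \<alpha> - \<delta> \<and> u (fst w) = u (fst z)"
      by (rule C1[OF zt lv w])
    have 2: "w \<in> topspace ?T" "thick_F g w = thick_F g z" using cls_sub[OF w] by auto
    show "w \<in> P b" using 1 2 zu lv unfolding P_def U_def by auto
  qed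
  define Ob where "Ob = (\<lambda>b. {t \<in> topspace (edge_space \<alpha>). \<psi>1 t \<in> ?cls ` P b})"
  have Oo: "openin (edge_space \<alpha>) (Ob b)" for b
  proof -
    have c: "continuous_map (edge_space \<alpha>) (thick M g \<epsilon>) \<psi>1" using n1 unfolding reeb_morphism_def by blast
    show ?thesis unfolding Ob_def by (rule pull_open[OF c open_cls_image[OF Po Pc]])
  qed
  have Oiff: "t \<in> Ob b \<longleftrightarrow> b = v t" if t: "t \<in> J" for t b
  proof
    assume "t \<in> Ob b"
    then obtain z' where z': "z' \<in> P b" "\<psi>1 t = ?cls z'" unfolding Ob_def by blast
    have zt': "z' \<in> topspace ?T" using z' by (simp add: P_def)
    have "z' \<in> \<psi>1 t" using cls_mem[OF zt', of g] z'(2) by simp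
    then have "u (fst z') = v t" using psi1_elem[OF t] by blast
    moreover have "u (fst z') = b" using z'(1) by (simp add: P_def U_def)
    ultimately show "b = v t" by simp
  next
    assume bv: "b = v t"
    obtain z where z: "z \<in> topspace ?T" "\<psi>1 t = ?cls z" "thick_F g z = t"
      using morph_rep[OF n1 J_top[OF t]] by blast
    have "z \<in> \<psi>1 t" using cls_mem[OF z(1), of g] z(2) by simp
    then have "fst z \<in> topspace M \<and> \<delta> < g (fst z) \<and> g (fst z) < \<alpha> - \<delta> \<and> u (fst z) = v t" by (rule psi1_elem[OF t])
    then have "z \<in> P b" using z t bv unfolding P_def U_def J_def by auto
    then show "t \<in> Ob b" unfolding Ob_def using z(2) J_top[OF t] by blast
  qed
  have Jc: "connectedin (edge_space \<alpha>) J"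
    unfolding edge_space_def connectedin_subtopology using J_top by (auto simp: J_def edge_space_def)
  have cov: "J \<subseteq> Ob (v t1) \<union> Ob (\<not> v t1)"
  proof
    fix t assume t: "t \<in> J"
    show "t \<in> Ob (v t1) \<union> Ob (\<not> v t1)"
    proof (cases "v t = v t1")
      case True then show ?thesis using Oiff[OF t, of "v t1"] by simp
    next
      case False then show ?thesis using Oiff[OF t, of "\<not> v t1"] by simp
    qed
  qed
  have dis: "Ob (v t1) \<inter> Ob (\<not> v t1) \<inter> J = {}"
  proof (rule ccontr)
    assume "Ob (v t1) \<inter> Ob (\<not> v t1) \<inter> J \<noteq> {}"
    then obtain t where "t \<in> Ob (v t1)" "t \<in> Ob (\<not> v t1)" "t \<in> J" by blast
    then show False using Oiff[of t "v t1"] Oiff[of t "\<not> v t1"] by simp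
  qed
  have "t1 \<in> Ob (v t1)" using Oiff[OF t1] by simp
  then have "J \<subseteq> Ob (v t1)" by (rule sep[OF Jc Oo Oo cov dis t1])
  then have "t2 \<in> Ob (v t1)" using t2 by (rule subsetD)
  then show ?thesis using Oiff[OF t2] by simp
qed

end




lemma gfst_cont: "continuous_map X euclideanreal g \<Longrightarrow> continuous_map (thick_space X r) euclideanreal (\<lambda>w. g (fst w))"
  unfolding thick_space_def using continuous_map_compose[OF continuous_map_fst] by (simp add: o_def)

context P2 begin

lemma C3:
  assumes x: "x \<in> topspace M" and lv: "\<delta>+2*\<epsilon> < g x" "g x < \<alpha>-\<delta>-2*\<epsilon>"
  shows "u x = v (\<alpha>/2)"
proof -
  have Cx: "\<phi>1 x \<in> topspace (thick (edge_space \<alpha>) (\<lambda>t. t) \<epsilon>)"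
    using m1 unfolding reeb_morphism_def by (intro funcset_mem[OF continuous_map_funspace x]) blast
  obtain p q where pq: "p \<in> \<phi>1 x" "q \<in> \<psi>1 (fst p)"
    "reeb_ext M g \<epsilon> \<psi>1 (\<phi>1 x) = thick_cls M g (2*\<epsilon>) (fst q, snd q + snd p)"
    "p \<in> topspace (thick_space (edge_space \<alpha>) \<epsilon>)" "thick_F (\<lambda>t. t) p = thick_fun (\<lambda>t. t) (\<phi>1 x)"
    "q \<in> topspace (thick_space M \<epsilon>)" "thick_F g q = fst p"
    using ext_unfold[OF n1 Cx] by blast
  have fx: "thick_fun (\<lambda>t. t) (\<phi>1 x) = g x" using m1 x unfolding reeb_morphism_def by blast
  have ps: "-\<epsilon> \<le> snd p" "snd p \<le> \<epsilon>" "fst p + snd p = g x" using pq(4,5) fx by (auto simp: topspace_TS thick_F_def)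
  have pJ: "fst p \<in> J" using ps lv unfolding J_def by auto
  have hJ: "\<alpha>/2 \<in> J" using eb e0 d0 unfolding J_def by auto
  have uq: "u (fst q) = v (\<alpha>/2)" using psi1_elem[OF pJ pq(2)] v_const[OF pJ hJ] by simp
  have wT: "(fst q, snd q + snd p) \<in> topspace (thick_space M (2*\<epsilon>))" using pq(6) ps by (auto simp: topspace_TS)
  have "thick_cls M g (2*\<epsilon>) (fst q, snd q + snd p) = thick_cls M g (2*\<epsilon>) (x, 0)"
    using eqM1 x pq(3) unfolding reeb_shift_def by simp
  then have wC: "(fst q, snd q + snd p) \<in> thick_cls M g (2*\<epsilon>) (x, 0)" using cls_mem[OF wT, of g] by simp
  have x0: "(x, 0) \<in> topspace (thick_space M (2*\<epsilon>))" using x e0 by (simp add: topspace_TS)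
  have lv0: "\<delta> + 2*\<epsilon> < thick_F g (x, 0)" "thick_F g (x, 0) < \<alpha> - \<delta> - 2*\<epsilon>" using lv by (auto simp: thick_F_def)
  have "u (fst q) = u x" using C1[OF x0 lv0 wC] by simp
  then show ?thesis using uq by simp
qed

lemma E:
  assumes y: "y \<in> topspace (loop_space \<alpha>)" and lv: "2*\<delta> < fst y" "fst y < \<alpha>-2*\<delta>" and w: "w \<in> \<psi>2 y"
  shows "fst w \<in> topspace M \<and> \<delta> < g (fst w) \<and> g (fst w) < \<alpha> - \<delta> \<and> u (fst w) = (0 < snd y)"
proof -
  have Cy: "\<psi>2 y \<in> topspace (thick M g \<delta>)"
    using n2 unfolding reeb_morphism_def by (intro funcset_mem[OF continuous_map_funspace y]) blast
  obtain p q where pq: "p \<in> \<psi>2 y" "q \<in> \<phi>2 (fst p)"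
    "reeb_ext (loop_space \<alpha>) fst \<delta> \<phi>2 (\<psi>2 y) = thick_cls (loop_space \<alpha>) fst (2*\<delta>) (fst q, snd q + snd p)"
    "p \<in> topspace (thick_space M \<delta>)" "thick_F g p = thick_fun g (\<psi>2 y)"
    "q \<in> topspace (thick_space (loop_space \<alpha>) \<delta>)" "thick_F fst q = g (fst p)"
    using ext_unfold[OF m2 Cy] by blast
  have fy: "thick_fun g (\<psi>2 y) = fst y" using n2 y unfolding reeb_morphism_def by blast
  have ps: "fst p \<in> topspace M" "-\<delta> \<le> snd p" "snd p \<le> \<delta>" "g (fst p) + snd p = fst y" using pq(4,5) fy by (auto simp: topspace_TS thick_F_def)
  have wT: "(fst q, snd q + snd p) \<in> topspace (thick_space (loop_space \<alpha>) (2*\<delta>))" using pq(6) ps by (auto simp: topspace_TS)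
  have "thick_cls (loop_space \<alpha>) fst (2*\<delta>) (fst q, snd q + snd p) = thick_cls (loop_space \<alpha>) fst (2*\<delta>) (y, 0)"
    using eqR2 y pq(3) unfolding reeb_shift_def by simp
  then have wC: "(fst q, snd q + snd p) \<in> thick_cls (loop_space \<alpha>) fst (2*\<delta>) (y, 0)" using cls_mem[OF wT, of fst] by simp
  have y0: "(y, 0) \<in> topspace (thick_space (loop_space \<alpha>) (2*\<delta>))" using y d0 by (simp add: topspace_TS)
  have lv0: "2*\<delta> < thick_F fst (y, 0)" "thick_F fst (y, 0) < \<alpha> - 2*\<delta>" using lv by (auto simp: thick_F_def)
  have s1: "(0 < snd (fst q)) = (0 < snd y)" using R2_sign(1)[OF y0 lv0 wC] by simp
  have gp: "\<delta> < g (fst p)" "g (fst p) < \<alpha> - \<delta>" using ps lv by auto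
  have s2: "(0 < snd (fst q)) = u (fst p)" using u_sign(1)[OF ps(1) gp pq(2)] .
  obtain z0 where z0: "z0 \<in> topspace (thick_space M \<delta>)" "\<psi>2 y = thick_cls M g \<delta> z0" "thick_F g z0 = fst y"
    using morph_rep[OF n2 y] by blast
  have lz: "\<delta> + \<delta> < thick_F g z0" "thick_F g z0 < \<alpha> - \<delta> - \<delta>" using z0(3) lv by auto
  have 1: "fst w \<in> topspace M \<and> \<delta> < g (fst w) \<and> g (fst w) < \<alpha> - \<delta> \<and> u (fst w) = u (fst z0)"
    using C1[OF z0(1) lz] w z0(2) by simp
  have 2: "u (fst p) = u (fst z0)" using C1[OF z0(1) lz] pq(1) z0(2) by simp
  show ?thesis using 1 2 s1 s2 by simp
qed

lemma K: "x \<in> topspace M \<Longrightarrow> g x = \<alpha>/2 \<Longrightarrow> u x = v (\<alpha>/2)"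
  using C3 eb by auto

lemma side:
  assumes z: "z \<in> topspace (thick_space M \<delta>)" and lv: "2*\<delta> < thick_F g z" "thick_F g z < \<alpha>-2*\<delta>"
    and uz: "u (fst z) \<noteq> v (\<alpha>/2)" and w: "w \<in> thick_cls M g \<delta> z"
  shows "(g (fst w) < \<alpha>/2) = (g (fst z) < \<alpha>/2)" "g (fst w) \<noteq> \<alpha>/2"
proof -
  let ?T = "thick_space M \<delta>"
  let ?C = "thick_cls M g \<delta> z"
  have lv': "\<delta> + \<delta> < thick_F g z" "thick_F g z < \<alpha> - \<delta> - \<delta>" using lv by auto
  have ne: "g (fst w') \<noteq> \<alpha>/2" if "w' \<in> ?C" for w'
  proof
    assume h: "g (fst w') = \<alpha>/2"
    have "fst w' \<in> topspace M \<and> u (fst w') = u (fst z)" using C1[OF z lv' that] by simp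
    then show False using K[of "fst w'"] h uz by simp
  qed
  let ?P = "{w \<in> topspace ?T. g (fst w) < \<alpha>/2}"
  let ?Q = "{w \<in> topspace ?T. \<alpha>/2 < g (fst w)}"
  have Po: "openin ?T ?P" by (rule open_lt[OF gfst_cont[OF gc]])
  have Qo: "openin ?T ?Q" by (rule open_gt[OF gfst_cont[OF gc]])
  have cov: "?C \<subseteq> ?P \<union> ?Q"
  proof
    fix w' assume w': "w' \<in> ?C"
    then show "w' \<in> ?P \<union> ?Q" using ne[OF w'] cls_sub[OF w'] by (auto simp: neq_iff)
  qed
  have zC: "z \<in> ?C" by (rule cls_mem[OF z])
  show "g (fst w) \<noteq> \<alpha>/2" using ne[OF w] .
  show "(g (fst w) < \<alpha>/2) = (g (fst z) < \<alpha>/2)"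
  proof (cases "g (fst z) < \<alpha>/2")
    case True
    then have "z \<in> ?P" using z by simp
    have "?C \<subseteq> ?P" by (rule sep[OF cls_conn Po Qo cov _ zC \<open>z \<in> ?P\<close>]) auto
    then show ?thesis using w True by auto
  next
    case False
    then have "z \<in> ?Q" using z ne[OF zC] by (auto simp: neq_iff)
    have cov': "?C \<subseteq> ?Q \<union> ?P" using cov by blast
    have "?C \<subseteq> ?Q" by (rule sep[OF cls_conn Qo Po cov' _ zC \<open>z \<in> ?Q\<close>]) auto
    then show ?thesis using w False by auto
  qed
qed

end




context P2 begin

lemma contra: False
proof -
  define \<kappa> where "\<kappa> = v (\<alpha>/2)"
  define \<beta> where "\<beta> = (\<not> \<kappa>)"
  define sg :: real where "sg = (if \<beta> then 1 else -1)"
  define yA where "yA = (\<lambda>a::real. (a, sg * (a*(\<alpha>-a))))"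
  let ?T = "thick_space M \<delta>"
  let ?cls = "thick_cls M g \<delta>"
  have yA_top: "yA a \<in> topspace (loop_space \<alpha>)" "2*\<delta> < fst (yA a)" "fst (yA a) < \<alpha>-2*\<delta>" "(0 < snd (yA a)) = \<beta>"
    if a: "a \<in> {2*\<delta><..<\<alpha>-2*\<delta>}" for a
  proof -
    have a0: "0 < a" "a < \<alpha>" using a d0 by auto
    then have pos: "0 < a*(\<alpha>-a)" by simp
    show "yA a \<in> topspace (loop_space \<alpha>)" using a0 unfolding yA_def loop_space_def sg_def by auto
    show "2*\<delta> < fst (yA a)" "fst (yA a) < \<alpha>-2*\<delta>" using a unfolding yA_def by auto
    show "(0 < snd (yA a)) = \<beta>" using pos unfolding yA_def sg_def by auto
  qed
  define P where "P = {w \<in> topspace ?T. 2*\<delta> < thick_F g w \<and> thick_F g w < \<alpha>-2*\<delta> \<and> fst w \<in> U \<beta> \<and> g (fst w) < \<alpha>/2}"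
  define Q where "Q = {w \<in> topspace ?T. 2*\<delta> < thick_F g w \<and> thick_F g w < \<alpha>-2*\<delta> \<and> fst w \<in> U \<beta> \<and> \<alpha>/2 < g (fst w)}"
  have Po: "openin ?T P"
  proof -
    have "openin ?T (({w \<in> topspace ?T. 2*\<delta> < thick_F g w \<and> thick_F g w < \<alpha>-2*\<delta>} \<inter> {w \<in> topspace ?T. fst w \<in> U \<beta>})
          \<inter> {w \<in> topspace ?T. g (fst w) < \<alpha>/2})"
      by (intro openin_Int open_band[OF F_cont[OF gc]] open_fst_pre[OF U_open] open_lt[OF gfst_cont[OF gc]])
    moreover have "(({w \<in> topspace ?T. 2*\<delta> < thick_F g w \<and> thick_F g w < \<alpha>-2*\<delta>} \<inter> {w \<in> topspace ?T. fst w \<in> U \<beta>})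
          \<inter> {w \<in> topspace ?T. g (fst w) < \<alpha>/2}) = P" unfolding P_def by blast
    ultimately show ?thesis by simp
  qed
  have Qo: "openin ?T Q"
  proof -
    have "openin ?T (({w \<in> topspace ?T. 2*\<delta> < thick_F g w \<and> thick_F g w < \<alpha>-2*\<delta>} \<inter> {w \<in> topspace ?T. fst w \<in> U \<beta>})
          \<inter> {w \<in> topspace ?T. \<alpha>/2 < g (fst w)})"
      by (intro openin_Int open_band[OF F_cont[OF gc]] open_fst_pre[OF U_open] open_gt[OF gfst_cont[OF gc]])
    moreover have "(({w \<in> topspace ?T. 2*\<delta> < thick_F g w \<and> thick_F g w < \<alpha>-2*\<delta>} \<inter> {w \<in> topspace ?T. fst w \<in> U \<beta>})
          \<inter> {w \<in> topspace ?T. \<alpha>/2 < g (fst w)}) = Q" unfolding Q_def by blast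
    ultimately show ?thesis by simp
  qed
  have clos: "w \<in> topspace ?T \<and> 2*\<delta> < thick_F g w \<and> thick_F g w < \<alpha>-2*\<delta> \<and> fst w \<in> U \<beta> \<and> (g (fst w) < \<alpha>/2) = (g (fst z) < \<alpha>/2) \<and> g (fst w) \<noteq> \<alpha>/2"
    if z: "z \<in> topspace ?T" "2*\<delta> < thick_F g z" "thick_F g z < \<alpha>-2*\<delta>" "fst z \<in> U \<beta>" and w: "w \<in> ?cls z" for z w
  proof -
    have lv': "\<delta> + \<delta> < thick_F g z" "thick_F g z < \<alpha> - \<delta> - \<delta>" using z by auto
    have uz: "u (fst z) = \<beta>" using z(4) by (simp add: U_def)
    have 1: "fst w \<in> topspace M \<and> \<delta> < g (fst w) \<and> g (fst w) < \<alpha> - \<delta> \<and> u (fst w) = u (fst z)"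
      by (rule C1[OF z(1) lv' w])
    have 2: "w \<in> topspace ?T" "thick_F g w = thick_F g z" using cls_sub[OF w] by auto
    have uz': "u (fst z) \<noteq> v (\<alpha>/2)" using uz unfolding \<beta>_def \<kappa>_def by simp
    have 3: "(g (fst w) < \<alpha>/2) = (g (fst z) < \<alpha>/2)" "g (fst w) \<noteq> \<alpha>/2" using side[OF z(1) z(2) z(3) uz' w] by auto
    show ?thesis using 1 2 3 uz z unfolding U_def by auto
  qed
  have Pc: "\<forall>z\<in>P. ?cls z \<subseteq> P"
  proof (intro ballI subsetI)
    fix z w assume z: "z \<in> P" and w: "w \<in> ?cls z"
    then show "w \<in> P" using clos[of z w] unfolding P_def by auto
  qed
  have Qc: "\<forall>z\<in>Q. ?cls z \<subseteq> Q"
  proof (intro ballI subsetI)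
    fix z w assume z: "z \<in> Q" and w: "w \<in> ?cls z"
    have "(g (fst w) < \<alpha>/2) = (g (fst z) < \<alpha>/2)" "g (fst w) \<noteq> \<alpha>/2" using clos[of z w] z w unfolding Q_def by auto
    then show "w \<in> Q" using clos[of z w] z w unfolding Q_def by auto
  qed
  have PQ: "P \<inter> Q = {}" unfolding P_def Q_def by auto
  have c2: "continuous_map (loop_space \<alpha>) (thick M g \<delta>) \<psi>2" using n2 unfolding reeb_morphism_def by blast
  define AP where "AP = {y \<in> topspace (loop_space \<alpha>). \<psi>2 y \<in> ?cls ` P}"
  define AQ where "AQ = {y \<in> topspace (loop_space \<alpha>). \<psi>2 y \<in> ?cls ` Q}"
  have APo: "openin (loop_space \<alpha>) AP" unfolding AP_def by (rule pull_open[OF c2 open_cls_image[OF Po Pc]])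
  have AQo: "openin (loop_space \<alpha>) AQ" unfolding AQ_def by (rule pull_open[OF c2 open_cls_image[OF Qo Qc]])
  have dis: "AP \<inter> AQ = {}"
  proof (rule ccontr)
    assume "AP \<inter> AQ \<noteq> {}"
    then obtain y z1 z2 where "z1 \<in> P" "z2 \<in> Q" "?cls z1 = ?cls z2" unfolding AP_def AQ_def by blast
    moreover have "z1 \<in> topspace ?T" using \<open>z1 \<in> P\<close> by (simp add: P_def)
    ultimately have "z1 \<in> Q" using cls_mem[of z1 M \<delta> g] Qc by blast
    then show False using \<open>z1 \<in> P\<close> PQ by blast
  qed
  have rep: "\<exists>z0. z0 \<in> topspace ?T \<and> \<psi>2 (yA a) = ?cls z0 \<and> thick_F g z0 = a \<and> fst z0 \<in> U \<beta> \<and> g (fst z0) \<noteq> \<alpha>/2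
      \<and> a - \<delta> \<le> g (fst z0) \<and> g (fst z0) \<le> a + \<delta>"
    if a: "a \<in> {2*\<delta><..<\<alpha>-2*\<delta>}" for a
  proof -
    obtain z0 where z0: "z0 \<in> topspace ?T" "\<psi>2 (yA a) = ?cls z0" "thick_F g z0 = fst (yA a)"
      using morph_rep[OF n2 yA_top(1)[OF a]] by blast
    have "z0 \<in> \<psi>2 (yA a)" using cls_mem[OF z0(1), of g] z0(2) by simp
    then have e: "fst z0 \<in> topspace M \<and> \<delta> < g (fst z0) \<and> g (fst z0) < \<alpha> - \<delta> \<and> u (fst z0) = \<beta>"
      using E[OF yA_top(1-3)[OF a]] yA_top(4)[OF a] by simp
    have ne: "g (fst z0) \<noteq> \<alpha>/2" using K[of "fst z0"] e unfolding \<beta>_def \<kappa>_def by auto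
    have fa: "fst (yA a) = a" unfolding yA_def by simp
    have "-\<delta> \<le> snd z0" "snd z0 \<le> \<delta>" "g (fst z0) + snd z0 = a" using z0(1,3) fa by (auto simp: topspace_TS thick_F_def)
    then have "fst z0 \<in> U \<beta>" "a - \<delta> \<le> g (fst z0)" "g (fst z0) \<le> a + \<delta>" "thick_F g z0 = a"
      using e z0(3) fa unfolding U_def by auto
    then show ?thesis using z0(1,2) ne by blast
  qed
  define S where "S = yA ` {2*\<delta><..<\<alpha>-2*\<delta>}"
  have Sc: "connectedin (loop_space \<alpha>) S"
  proof -
    have "connected S" unfolding S_def yA_def
      by (rule connected_continuous_image) (intro continuous_intros, simp)
    moreover have "S \<subseteq> topspace (loop_space \<alpha>)" using yA_top(1) unfolding S_def by blast
    moreover have "topspace (loop_space \<alpha>) = Lp \<alpha>" by (simp add: loop_space_def Lp_def)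
    ultimately show ?thesis unfolding loop_space_def connectedin_subtopology by (simp add: Lp_def)
  qed
  have cov: "S \<subseteq> AP \<union> AQ"
  proof
    fix y assume "y \<in> S"
    then obtain a where a: "a \<in> {2*\<delta><..<\<alpha>-2*\<delta>}" "y = yA a" unfolding S_def by blast
    obtain z0 where z0: "z0 \<in> topspace ?T" "\<psi>2 (yA a) = ?cls z0" "thick_F g z0 = a" "fst z0 \<in> U \<beta>" "g (fst z0) \<noteq> \<alpha>/2"
      using rep[OF a(1)] by blast
    have "z0 \<in> P \<or> z0 \<in> Q" using z0 a(1) unfolding P_def Q_def by (auto simp: neq_iff)
    then show "y \<in> AP \<union> AQ" using z0(2) a yA_top(1)[OF a(1)] unfolding AP_def AQ_def by blast
  qed
  define a1 where "a1 = \<alpha>/4 + \<delta>/2"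
  define a2 where "a2 = 3*\<alpha>/4 - \<delta>/2"
  have a1: "a1 \<in> {2*\<delta><..<\<alpha>-2*\<delta>}" "a1 + \<delta> < \<alpha>/2" using db d0 a unfolding a1_def by auto
  have a2: "a2 \<in> {2*\<delta><..<\<alpha>-2*\<delta>}" "\<alpha>/2 < a2 - \<delta>" using db d0 a unfolding a2_def by auto
  have y1: "yA a1 \<in> AP"
  proof -
    obtain z0 where z0: "z0 \<in> topspace ?T" "\<psi>2 (yA a1) = ?cls z0" "thick_F g z0 = a1" "fst z0 \<in> U \<beta>"
       "g (fst z0) \<le> a1 + \<delta>"
      using rep[OF a1(1)] by blast
    have "z0 \<in> P" using z0 a1 unfolding P_def by auto
    then show ?thesis using z0(2) yA_top(1)[OF a1(1)] unfolding AP_def by blast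
  qed
  have y2: "yA a2 \<in> AQ"
  proof -
    obtain z0 where z0: "z0 \<in> topspace ?T" "\<psi>2 (yA a2) = ?cls z0" "thick_F g z0 = a2" "fst z0 \<in> U \<beta>"
       "a2 - \<delta> \<le> g (fst z0)"
      using rep[OF a2(1)] by blast
    have "z0 \<in> Q" using z0 a2 unfolding Q_def by auto
    then show ?thesis using z0(2) yA_top(1)[OF a2(1)] unfolding AQ_def by blast
  qed
  have y1S: "yA a1 \<in> S" using a1(1) unfolding S_def by blast
  have y2S: "yA a2 \<in> S" using a2(1) unfolding S_def by blast
  have dis': "AP \<inter> AQ \<inter> S = {}" using dis by blast
  have "S \<subseteq> AP" by (rule sep[OF Sc APo AQo cov dis' y1S y1])
  then show False using y2S y2 dis by blast
qed

end



lemma part2: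
  fixes \<alpha> :: real
  assumes a: "\<alpha> > 0"
  shows "\<not> (\<exists>M g. reeb_graph (M :: 'm topology) (g :: 'm \<Rightarrow> real) \<and>
               interleaving_distance M g (edge_space \<alpha>) (\<lambda>t. t) = ereal (\<alpha> / 8) \<and>
               interleaving_distance M g (loop_space \<alpha>) fst = ereal (\<alpha> / 8))"
proof
  assume "\<exists>M g. reeb_graph (M :: 'm topology) (g :: 'm \<Rightarrow> real) \<and>
               interleaving_distance M g (edge_space \<alpha>) (\<lambda>t. t) = ereal (\<alpha> / 8) \<and>
               interleaving_distance M g (loop_space \<alpha>) fst = ereal (\<alpha> / 8)"
  then obtain M :: "'m topology" and g where rg: "reeb_graph M g"
    and d1: "interleaving_distance M g (edge_space \<alpha>) (\<lambda>t. t) = ereal (\<alpha> / 8)"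
    and d2: "interleaving_distance M g (loop_space \<alpha>) fst = ereal (\<alpha> / 8)" by blast
  have gc: "continuous_map M euclideanreal g" using rg unfolding reeb_graph_def by blast
  have lt: "ereal (\<alpha>/8) < ereal (5*\<alpha>/32)" using a by simp
  have "Inf {ereal \<epsilon> |\<epsilon>. \<epsilon> \<ge> 0 \<and> interleaved M g (edge_space \<alpha>) (\<lambda>t. t) \<epsilon>} < ereal (5*\<alpha>/32)"
    using d1 lt unfolding interleaving_distance_def by simp
  then obtain x1 where "x1 \<in> {ereal \<epsilon> |\<epsilon>. \<epsilon> \<ge> 0 \<and> interleaved M g (edge_space \<alpha>) (\<lambda>t. t) \<epsilon>}" "x1 < ereal (5*\<alpha>/32)"
    unfolding Inf_less_iff by blast
  then obtain \<epsilon> where e: "\<epsilon> \<ge> 0" "interleaved M g (edge_space \<alpha>) (\<lambda>t. t) \<epsilon>" "\<epsilon> < 5*\<alpha>/32" by auto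
  have "Inf {ereal \<epsilon> |\<epsilon>. \<epsilon> \<ge> 0 \<and> interleaved M g (loop_space \<alpha>) fst \<epsilon>} < ereal (5*\<alpha>/32)"
    using d2 lt unfolding interleaving_distance_def by simp
  then obtain x2 where "x2 \<in> {ereal \<epsilon> |\<epsilon>. \<epsilon> \<ge> 0 \<and> interleaved M g (loop_space \<alpha>) fst \<epsilon>}" "x2 < ereal (5*\<alpha>/32)"
    unfolding Inf_less_iff by blast
  then obtain \<delta> where d: "\<delta> \<ge> 0" "interleaved M g (loop_space \<alpha>) fst \<delta>" "\<delta> < 5*\<alpha>/32" by auto
  obtain \<phi>1 \<psi>1 where i1: "reeb_morphism M g (thick (edge_space \<alpha>) (\<lambda>t. t) \<epsilon>) (thick_fun (\<lambda>t. t)) \<phi>1"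
    "reeb_morphism (edge_space \<alpha>) (\<lambda>t. t) (thick M g \<epsilon>) (thick_fun g) \<psi>1"
    "\<forall>x\<in>topspace M. reeb_ext M g \<epsilon> \<psi>1 (\<phi>1 x) = reeb_shift M g (2 * \<epsilon>) x"
    using e(2) unfolding interleaved_def by blast
  obtain \<phi>2 \<psi>2 where i2: "reeb_morphism M g (thick (loop_space \<alpha>) fst \<delta>) (thick_fun fst) \<phi>2"
    "reeb_morphism (loop_space \<alpha>) fst (thick M g \<delta>) (thick_fun g) \<psi>2"
    "\<forall>y\<in>topspace (loop_space \<alpha>). reeb_ext (loop_space \<alpha>) fst \<delta> \<phi>2 (\<psi>2 y) = reeb_shift (loop_space \<alpha>) fst (2 * \<delta>) y"
    using d(2) unfolding interleaved_def by blast
  have "P2 M g \<alpha> \<epsilon> \<delta> \<phi>1 \<psi>1 \<phi>2 \<psi>2"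
    by (unfold_locales; (rule i1 i2 gc a e(1) d(1))?) (use e(3) d(3) a in auto)
  then show False by (rule P2.contra)
qed

theorem mainTheorem7:
  fixes \<alpha> :: real
  assumes "\<alpha> > 0"
  shows "interleaving_distance (edge_space \<alpha>) (\<lambda>t. t) (loop_space \<alpha>) fst = ereal (\<alpha> / 4) \<and>
         \<not> (\<exists>M g. reeb_graph (M :: 'm topology) (g :: 'm \<Rightarrow> real) \<and>
               interleaving_distance M g (edge_space \<alpha>) (\<lambda>t. t) = ereal (\<alpha> / 8) \<and>
               interleaving_distance M g (loop_space \<alpha>) fst = ereal (\<alpha> / 8))"
  using part1[OF assms] part2[OF assms] by blast

end
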